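(* Let $\mathbf{I}$ be a $d$-system of ideals in a ring $R$ and $A:=\mathscr{A}(R,\mathbf{I})$. Then (i) $Ae_dA\cong(Ae_d)^{\oplus d}$ as left $A$-modules; (ii) $e_dAe_d\cong R/I_{d,d+1}$ as rings; (iii) if $d\ge2$, then $A/(Ae_dA)\cong\mathscr{A}(R,\mathbf{I}')$ as rings, where $\mathbf{I}':=\{I_{ij}\mid1\le i,j\le d\}$ (which is a $(d-1)$-system of ideals in $R$).
   Context: A $d$-system of ideals in $R$ is a collection $\{I_{ij}\mid1\le i,j\le d+1\}$ of two-sided ideals with $I_{ij}I_{jk}\subset I_{ik}$ and $I_{ij}=R$ for $i\ge j$. $\mathscr{A}(R,\mathbf{I}):=\bigoplus_{1\le i,j\le d}I_{ij}/I_{i,d+1}$ with multiplication $(x+I_{i,d+1})(y+I_{k,d+1})=\delta_{jk}(xy+I_{i,d+1})\in I_{il}/I_{i,d+1}$ for $x\in I_{ij},y\in I_{kl}$. Put $e_k:=1+I_{k,d+1}\in I_{kk}/I_{k,d+1}$ for $1\le k\le d$. *)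

theory Defs
  imports "HOL-Algebra.QuotRing" "HOL-Algebra.Ideal_Product"
begin

definition d_system :: "('a, 'b) ring_scheme \<Rightarrow> nat \<Rightarrow> (nat \<Rightarrow> nat \<Rightarrow> 'a set) \<Rightarrow> bool" where
  "d_system R d I \<longleftrightarrow>
     (\<forall>i\<in>{1..d+1}. \<forall>j\<in>{1..d+1}. ideal (I i j) R) \<and>
     (\<forall>i\<in>{1..d+1}. \<forall>j\<in>{1..d+1}. \<forall>k\<in>{1..d+1}. ideal_prod R (I i j) (I j k) \<subseteq> I i k) \<and>
     (\<forall>i\<in>{1..d+1}. \<forall>j\<in>{1..d+1}. j \<le> i \<longrightarrow> I i j = carrier R)"

definition coset_rep :: "'a set \<Rightarrow> 'a" where
  "coset_rep C = (SOME x. x \<in> C)"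

text \<open>The algebra A(R, I) = direct sum over 1 \<le> i, j \<le> d of I_ij / I_{i,d+1}.
  An element is a d\<times>d matrix whose (i,j) entry is a coset I_{i,d+1} +> x with x \<in> I_ij;
  entries outside the index range are fixed to {} (so that elements are determined by their entries).
  Multiplication: (x + I_{i,d+1})(y + I_{k,d+1}) = \<delta>_jk (xy + I_{i,d+1}), extended bilinearly,
  i.e. matrix multiplication computed on representatives.\<close>
definition tiled_carrier :: "('a, 'b) ring_scheme \<Rightarrow> nat \<Rightarrow> (nat \<Rightarrow> nat \<Rightarrow> 'a set) \<Rightarrow> (nat \<Rightarrow> nat \<Rightarrow> 'a set) set" where
  "tiled_carrier R d I = {M. (\<forall>i\<in>{1..d}. \<forall>j\<in>{1..d}. \<exists>x\<in>I i j. M i j = I i (d+1) +>\<^bsub>R\<^esub> x) \<and>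
                   (\<forall>i j. \<not> (i \<in> {1..d} \<and> j \<in> {1..d}) \<longrightarrow> M i j = {})}"

definition tiled_mult :: "('a, 'b) ring_scheme \<Rightarrow> nat \<Rightarrow> (nat \<Rightarrow> nat \<Rightarrow> 'a set) \<Rightarrow> (nat \<Rightarrow> nat \<Rightarrow> 'a set) \<Rightarrow> (nat \<Rightarrow> nat \<Rightarrow> 'a set) \<Rightarrow> (nat \<Rightarrow> nat \<Rightarrow> 'a set)" where
  "tiled_mult R d I M N = (\<lambda>i l. if i \<in> {1..d} \<and> l \<in> {1..d}
      then I i (d+1) +>\<^bsub>R\<^esub> (finsum R (\<lambda>j. coset_rep (M i j) \<otimes>\<^bsub>R\<^esub> coset_rep (N j l)) {1..d})
      else {})"

definition tiled_add :: "('a, 'b) ring_scheme \<Rightarrow> nat \<Rightarrow> (nat \<Rightarrow> nat \<Rightarrow> 'a set) \<Rightarrow> (nat \<Rightarrow> nat \<Rightarrow> 'a set) \<Rightarrow> (nat \<Rightarrow> nat \<Rightarrow> 'a set)" where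
  "tiled_add R d M N = (\<lambda>i j. if i \<in> {1..d} \<and> j \<in> {1..d} then M i j <+>\<^bsub>R\<^esub> N i j else {})"

definition tiled_diag :: "('a, 'b) ring_scheme \<Rightarrow> nat \<Rightarrow> (nat \<Rightarrow> nat \<Rightarrow> 'a set) \<Rightarrow> (nat \<Rightarrow> nat \<Rightarrow> bool) \<Rightarrow> (nat \<Rightarrow> nat \<Rightarrow> 'a set)" where
  "tiled_diag R d I P = (\<lambda>i j. if i \<in> {1..d} \<and> j \<in> {1..d}
      then I i (d+1) +>\<^bsub>R\<^esub> (if P i j then \<one>\<^bsub>R\<^esub> else \<zero>\<^bsub>R\<^esub>) else {})"

definition tiled_alg :: "('a, 'b) ring_scheme \<Rightarrow> nat \<Rightarrow> (nat \<Rightarrow> nat \<Rightarrow> 'a set) \<Rightarrow> (nat \<Rightarrow> nat \<Rightarrow> 'a set) ring" where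
  "tiled_alg R d I =
    \<lparr>carrier = tiled_carrier R d I, mult = tiled_mult R d I,
     one = tiled_diag R d I (\<lambda>i j. i = j), zero = tiled_diag R d I (\<lambda>i j. False),
     add = tiled_add R d\<rparr>"

definition tiled_idem :: "('a, 'b) ring_scheme \<Rightarrow> nat \<Rightarrow> (nat \<Rightarrow> nat \<Rightarrow> 'a set) \<Rightarrow> nat \<Rightarrow> (nat \<Rightarrow> nat \<Rightarrow> 'a set)" where
  "tiled_idem R d I k = tiled_diag R d I (\<lambda>i j. i = k \<and> j = k)"

definition corner_ring :: "('c, 'd) ring_scheme \<Rightarrow> 'c \<Rightarrow> 'c ring" where
  "corner_ring A e = \<lparr>carrier = {e \<otimes>\<^bsub>A\<^esub> a \<otimes>\<^bsub>A\<^esub> e | a. a \<in> carrier A},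
     mult = mult A, one = e, zero = zero A, add = add A\<rparr>"

definition left_module_iso ::
  "('c, 'd) ring_scheme \<Rightarrow> 'm set \<Rightarrow> ('m \<Rightarrow> 'm \<Rightarrow> 'm) \<Rightarrow> ('c \<Rightarrow> 'm \<Rightarrow> 'm)
     \<Rightarrow> 'n set \<Rightarrow> ('n \<Rightarrow> 'n \<Rightarrow> 'n) \<Rightarrow> ('c \<Rightarrow> 'n \<Rightarrow> 'n) \<Rightarrow> ('m \<Rightarrow> 'n) \<Rightarrow> bool" where
  "left_module_iso A M addM smM N addN smN f \<longleftrightarrow>
     bij_betw f M N \<and>
     (\<forall>x\<in>M. \<forall>y\<in>M. f (addM x y) = addN (f x) (f y)) \<and>
     (\<forall>a\<in>carrier A. \<forall>x\<in>M. f (smM a x) = smN a (f x))"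

definition dsum_power_carrier :: "'c set \<Rightarrow> nat \<Rightarrow> (nat \<Rightarrow> 'c) set" where
  "dsum_power_carrier L d = PiE {1..d} (\<lambda>_. L)"

end

theory Submission
  imports Defs
begin



definition mkm :: "('a,'b) ring_scheme \<Rightarrow> nat \<Rightarrow> (nat \<Rightarrow> nat \<Rightarrow> 'a set) \<Rightarrow> (nat \<Rightarrow> nat \<Rightarrow> 'a) \<Rightarrow> (nat \<Rightarrow> nat \<Rightarrow> 'a set)" where
  "mkm R d I f = (\<lambda>i j. if i \<in> {1..d} \<and> j \<in> {1..d} then I i (d+1) +>\<^bsub>R\<^esub> f i j else {})"

context ring begin

lemma coset_eq:
  assumes H: "ideal H R" and a: "a \<in> carrier R" and b: "b \<in> carrier R"
  shows "(H +> a = H +> b) \<longleftrightarrow> a \<ominus> b \<in> H"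
proof -
  interpret H: ideal H R by (rule H)
  show ?thesis
  proof
    assume e: "H +> a = H +> b"
    have "a \<in> H +> a" using a H.a_rcos_self by simp
    hence "a \<in> H +> b" using e by simp
    thus "a \<ominus> b \<in> H" using H.a_rcos_module_minus[OF ring_axioms b a] by simp
  next
    assume "a \<ominus> b \<in> H"
    hence "a \<in> H +> b" using H.a_rcos_module_minus[OF ring_axioms b a] by simp
    thus "H +> a = H +> b" using H.a_repr_independence'[of a b] b by simp
  qed
qed

lemma coset_absorb:
  assumes H: "ideal H R" and h: "h \<in> H" and x: "x \<in> carrier R"
  shows "H +> (h \<oplus> x) = H +> x"
proof -
  interpret H: ideal H R by (rule H)
  have "h \<oplus> x \<in> H +> x" using h unfolding a_r_coset_def' by blast
  thus ?thesis using H.a_repr_independence' x by simp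
qed

lemma rep_decomp:
  assumes H: "ideal H R" and x: "x \<in> carrier R"
  shows "\<exists>h\<in>H. coset_rep (H +> x) = h \<oplus> x"
proof -
  interpret H: ideal H R by (rule H)
  have "x \<in> H +> x" using x H.a_rcos_self by simp
  hence "coset_rep (H +> x) \<in> H +> x" unfolding coset_rep_def by (rule someI)
  thus ?thesis unfolding a_r_coset_def' by blast
qed

lemma finsum_ideal:
  assumes H: "ideal H R" and fin: "finite S"
  shows "(\<forall>j\<in>S. c j \<in> H) \<Longrightarrow> finsum R c S \<in> H"
  using fin
proof (induct S rule: finite_induct)
  case empty
  then show ?case using H by (simp add: additive_subgroup.zero_closed ideal.axioms(1))
next
  case (insert x F)
  interpret H: ideal H R by (rule H)
  have "c \<in> F \<rightarrow> carrier R" "c x \<in> carrier R" using insert H.a_Hcarr by auto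
  then show ?case using insert by (simp add: finsum_insert H.a_closed)
qed

lemma finsum_swap:
  assumes fa: "finite S" and fb: "finite T"
  shows "(\<And>i j. i \<in> S \<Longrightarrow> j \<in> T \<Longrightarrow> f i j \<in> carrier R) \<Longrightarrow>
    (\<Oplus>i\<in>S. \<Oplus>j\<in>T. f i j) = (\<Oplus>j\<in>T. \<Oplus>i\<in>S. f i j)"
  using fa
proof (induct S rule: finite_induct)
  case empty
  then show ?case by (simp add: finsum_zero)
next
  case (insert x F)
  have "(\<Oplus>i\<in>insert x F. \<Oplus>j\<in>T. f i j) = (\<Oplus>j\<in>T. f x j) \<oplus> (\<Oplus>i\<in>F. \<Oplus>j\<in>T. f i j)"
    using insert by (subst finsum_insert) (auto intro: finsum_closed)
  also have "\<dots> = (\<Oplus>j\<in>T. f x j) \<oplus> (\<Oplus>j\<in>T. \<Oplus>i\<in>F. f i j)" using insert by simp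
  also have "\<dots> = (\<Oplus>j\<in>T. f x j \<oplus> (\<Oplus>i\<in>F. f i j))"
    using insert fb by (subst finsum_addf) (auto intro: finsum_closed)
  also have "\<dots> = (\<Oplus>j\<in>T. \<Oplus>i\<in>insert x F. f i j)"
    using insert by (intro finsum_cong') (auto simp: finsum_insert)
  finally show ?case .
qed

lemma finsum_single:
  assumes "finite S" "k \<in> S" "\<And>j. j \<in> S \<Longrightarrow> t j \<in> carrier R" "\<And>j. j \<in> S \<Longrightarrow> j \<noteq> k \<Longrightarrow> t j = \<zero>"
  shows "finsum R t S = t k"
proof -
  have "finsum R t S = (\<Oplus>j\<in>S. if k = j then t j else \<zero>)"
    using assms by (intro finsum_cong') auto
  also have "\<dots> = t k" using assms by (intro finsum_singleton) auto
  finally show ?thesis .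
qed

end




locale dsys = ring +
  fixes d :: nat and I :: "nat \<Rightarrow> nat \<Rightarrow> 'a set"
  assumes ds: "d_system R d I"
begin

abbreviation "mk \<equiv> mkm R d I"
abbreviation "A \<equiv> tiled_alg R d I"

lemma ds1: "\<forall>i\<in>{1..d+1}. \<forall>j\<in>{1..d+1}. ideal (I i j) R"
  using ds unfolding d_system_def by (rule conjunct1)
lemma ds2: "\<forall>i\<in>{1..d+1}. \<forall>j\<in>{1..d+1}. \<forall>k\<in>{1..d+1}. ideal_prod R (I i j) (I j k) \<subseteq> I i k"
  using ds unfolding d_system_def by (rule conjunct2[THEN conjunct1])
lemma ds3: "\<forall>i\<in>{1..d+1}. \<forall>j\<in>{1..d+1}. j \<le> i \<longrightarrow> I i j = carrier R"
  using ds unfolding d_system_def by (rule conjunct2[THEN conjunct2])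

lemma ideal_I: "i \<in> {1..d+1} \<Longrightarrow> j \<in> {1..d+1} \<Longrightarrow> ideal (I i j) R"
  using ds1 by simp

lemma prod_in: "i \<in> {1..d+1} \<Longrightarrow> j \<in> {1..d+1} \<Longrightarrow> k \<in> {1..d+1} \<Longrightarrow> x \<in> I i j \<Longrightarrow> y \<in> I j k \<Longrightarrow> x \<otimes> y \<in> I i k"
proof -
  assume a: "i \<in> {1..d+1}" "j \<in> {1..d+1}" "k \<in> {1..d+1}" "x \<in> I i j" "y \<in> I j k"
  have "ideal_prod R (I i j) (I j k) \<subseteq> I i k" using ds2 a(1-3) by simp
  moreover have "x \<otimes> y \<in> ideal_prod R (I i j) (I j k)" using a(4,5) by (rule ideal_prod.prod)
  ultimately show ?thesis by (rule subsetD)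
qed

lemma I_full: "i \<in> {1..d+1} \<Longrightarrow> j \<in> {1..d+1} \<Longrightarrow> j \<le> i \<Longrightarrow> I i j = carrier R"
  using ds3 by simp

lemma I_carr: "i \<in> {1..d+1} \<Longrightarrow> j \<in> {1..d+1} \<Longrightarrow> x \<in> I i j \<Longrightarrow> x \<in> carrier R"
  by (rule ideal.Icarr[OF ideal_I])

lemma I_mono: assumes "i \<in> {1..d+1}" "j \<in> {1..d+1}" "k \<in> {1..d+1}" "j \<le> k" "x \<in> I i k"
  shows "x \<in> I i j"
proof -
  have "\<one> \<in> I k j" using I_full[of k j] assms by auto
  hence "x \<otimes> \<one> \<in> I i j" using prod_in[of i k j x \<one>] assms by auto
  thus ?thesis using I_carr[of i k x] assms by simp
qed

lemma J_sub: "i \<in> {1..d} \<Longrightarrow> j \<in> {1..d} \<Longrightarrow> x \<in> I i (d+1) \<Longrightarrow> x \<in> I i j"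
  by (rule I_mono[of i j "d+1"]) auto

lemma mk_carrier:
  assumes "\<And>i j. i \<in> {1..d} \<Longrightarrow> j \<in> {1..d} \<Longrightarrow> f i j \<in> I i j"
  shows "mk f \<in> carrier A"
  unfolding tiled_alg_def tiled_carrier_def partial_object.simps mem_Collect_eq
proof (intro conjI ballI allI impI)
  fix i j assume ij: "i \<in> {1..d}" "j \<in> {1..d}"
  show "\<exists>x\<in>I i j. mk f i j = I i (d + 1) +> x"
    using assms[OF ij] ij unfolding mkm_def by (intro bexI[of _ "f i j"]) auto
next
  fix i j assume "\<not> (i \<in> {1..d} \<and> j \<in> {1..d})"
  thus "mk f i j = {}" unfolding mkm_def by auto
qed

lemma carrier_E:
  assumes "M \<in> carrier A"
  obtains f where "M = mk f" "\<And>i j. i \<in> {1..d} \<Longrightarrow> j \<in> {1..d} \<Longrightarrow> f i j \<in> I i j"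
proof -
  define f where "f = (\<lambda>i j. SOME x. x \<in> I i j \<and> M i j = I i (d+1) +> x)"
  have M: "\<forall>i\<in>{1..d}. \<forall>j\<in>{1..d}. \<exists>x\<in>I i j. M i j = I i (d + 1) +> x"
     "\<forall>i j. \<not> (i \<in> {1..d} \<and> j \<in> {1..d}) \<longrightarrow> M i j = {}"
    using assms unfolding tiled_alg_def tiled_carrier_def by auto
  have f: "f i j \<in> I i j \<and> M i j = I i (d+1) +> f i j" if "i \<in> {1..d}" "j \<in> {1..d}" for i j
    unfolding f_def by (rule someI_ex) (use M that in blast)
  have "M = mk f" unfolding mkm_def using f M(2) by (intro ext) auto
  thus ?thesis using that f by blast
qed

lemma mk_cong: "(\<And>i j. i \<in> {1..d} \<Longrightarrow> j \<in> {1..d} \<Longrightarrow> f i j = g i j) \<Longrightarrow> mk f = mk g"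
  unfolding mkm_def by (intro ext) auto

lemma mk_eq_iff:
  assumes "\<And>i j. i \<in> {1..d} \<Longrightarrow> j \<in> {1..d} \<Longrightarrow> f i j \<in> carrier R"
    "\<And>i j. i \<in> {1..d} \<Longrightarrow> j \<in> {1..d} \<Longrightarrow> g i j \<in> carrier R"
  shows "mk f = mk g \<longleftrightarrow> (\<forall>i\<in>{1..d}. \<forall>j\<in>{1..d}. f i j \<ominus> g i j \<in> I i (d+1))"
proof
  assume e: "mk f = mk g"
  show "\<forall>i\<in>{1..d}. \<forall>j\<in>{1..d}. f i j \<ominus> g i j \<in> I i (d+1)"
  proof (intro ballI)
    fix i j assume ij: "i \<in> {1..d}" "j \<in> {1..d}"
    have "mk f i j = mk g i j" using e by simp
    hence "I i (d+1) +> f i j = I i (d+1) +> g i j" using ij unfolding mkm_def by simp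
    thus "f i j \<ominus> g i j \<in> I i (d+1)" using coset_eq[OF ideal_I[of i "d+1"]] ij assms by auto
  qed
next
  assume h: "\<forall>i\<in>{1..d}. \<forall>j\<in>{1..d}. f i j \<ominus> g i j \<in> I i (d+1)"
  show "mk f = mk g" unfolding mkm_def
  proof (intro ext)
    fix i j show "(if i \<in> {1..d} \<and> j \<in> {1..d} then I i (d + 1) +> f i j else {}) =
          (if i \<in> {1..d} \<and> j \<in> {1..d} then I i (d + 1) +> g i j else {})"
      using coset_eq[OF ideal_I[of i "d+1"]] h assms by auto
  qed
qed

lemma add_mk:
  assumes "\<And>i j. i \<in> {1..d} \<Longrightarrow> j \<in> {1..d} \<Longrightarrow> f i j \<in> carrier R"
    "\<And>i j. i \<in> {1..d} \<Longrightarrow> j \<in> {1..d} \<Longrightarrow> g i j \<in> carrier R"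
  shows "tiled_add R d (mk f) (mk g) = mk (\<lambda>i j. f i j \<oplus> g i j)"
  unfolding tiled_add_def mkm_def
proof (intro ext)
  fix i j show "(if i \<in> {1..d} \<and> j \<in> {1..d}
          then (if i \<in> {1..d} \<and> j \<in> {1..d} then I i (d + 1) +> f i j else {}) <+>
               (if i \<in> {1..d} \<and> j \<in> {1..d} then I i (d + 1) +> g i j else {})
          else {}) =
         (if i \<in> {1..d} \<and> j \<in> {1..d} then I i (d + 1) +> f i j \<oplus> g i j else {})"
    using ideal.a_rcos_sum[OF ideal_I[of i "d+1"]] assms by auto
qed

lemma mult_mk:
  assumes f: "\<And>i j. i \<in> {1..d} \<Longrightarrow> j \<in> {1..d} \<Longrightarrow> f i j \<in> I i j"
    and g: "\<And>i j. i \<in> {1..d} \<Longrightarrow> j \<in> {1..d} \<Longrightarrow> g i j \<in> I i j"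
  shows "tiled_mult R d I (mk f) (mk g) = mk (\<lambda>i l. \<Oplus>j\<in>{1..d}. f i j \<otimes> g j l)"
  unfolding tiled_mult_def
proof (intro ext)
  fix i l
  show "(if i \<in> {1..d} \<and> l \<in> {1..d}
        then I i (d + 1) +> (\<Oplus>j\<in>{1..d}. coset_rep (mk f i j) \<otimes> coset_rep (mk g j l)) else {}) =
       mk (\<lambda>i l. \<Oplus>j\<in>{1..d}. f i j \<otimes> g j l) i l"
  proof (cases "i \<in> {1..d} \<and> l \<in> {1..d}")
    case False then show ?thesis unfolding mkm_def by auto
  next
    case True
    have fc: "\<And>i j. i \<in> {1..d} \<Longrightarrow> j \<in> {1..d} \<Longrightarrow> f i j \<in> carrier R" by (rule I_carr[OF _ _ f]) auto
    have gc: "\<And>i j. i \<in> {1..d} \<Longrightarrow> j \<in> {1..d} \<Longrightarrow> g i j \<in> carrier R" by (rule I_carr[OF _ _ g]) auto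
    have "\<forall>j\<in>{1..d}. \<exists>c\<in>I i (d+1). coset_rep (mk f i j) \<otimes> coset_rep (mk g j l) = c \<oplus> f i j \<otimes> g j l"
    proof
      fix j assume j: "j \<in> {1..d}"
      obtain u where u: "u \<in> I i (d+1)" "coset_rep (mk f i j) = u \<oplus> f i j"
        using rep_decomp[OF ideal_I[of i "d+1"] fc[of i j]] True j unfolding mkm_def by auto
      obtain v where v: "v \<in> I j (d+1)" "coset_rep (mk g j l) = v \<oplus> g j l"
        using rep_decomp[OF ideal_I[of j "d+1"] gc[of j l]] True j unfolding mkm_def by auto
      have uc: "u \<in> carrier R" using u I_carr[of i "d+1"] True by auto
      have vc: "v \<in> carrier R" using v I_carr[of j "d+1"] j by auto
      have ufI: "u \<oplus> f i j \<in> I i j"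
        using ideal.axioms(1)[OF ideal_I[of i j]] additive_subgroup.a_closed J_sub[of i j u] u f[of i j] True j by auto
      have c1: "(u \<oplus> f i j) \<otimes> v \<in> I i (d+1)" using prod_in[of i j "d+1"] ufI v True j by auto
      have c2: "u \<otimes> g j l \<in> I i (d+1)" using ideal.I_r_closed[OF ideal_I[of i "d+1"]] u gc[of j l] True j by auto
      have c: "(u \<oplus> f i j) \<otimes> v \<oplus> u \<otimes> g j l \<in> I i (d+1)"
        using c1 c2 ideal.axioms(1)[OF ideal_I[of i "d+1"]] additive_subgroup.a_closed True by auto
      have "coset_rep (mk f i j) \<otimes> coset_rep (mk g j l) = ((u \<oplus> f i j) \<otimes> v \<oplus> u \<otimes> g j l) \<oplus> f i j \<otimes> g j l"
        using u v uc vc fc[of i j] gc[of j l] True j by (simp add: r_distr l_distr a_assoc)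
      thus "\<exists>c\<in>I i (d+1). coset_rep (mk f i j) \<otimes> coset_rep (mk g j l) = c \<oplus> f i j \<otimes> g j l"
        using c by blast
    qed
    then obtain c where c: "\<And>j. j \<in> {1..d} \<Longrightarrow> c j \<in> I i (d+1)"
      "\<And>j. j \<in> {1..d} \<Longrightarrow> coset_rep (mk f i j) \<otimes> coset_rep (mk g j l) = c j \<oplus> f i j \<otimes> g j l"
      by metis
    have cc: "\<And>j. j \<in> {1..d} \<Longrightarrow> c j \<in> carrier R" using c I_carr[of i "d+1"] True by auto
    have "(\<Oplus>j\<in>{1..d}. coset_rep (mk f i j) \<otimes> coset_rep (mk g j l)) = (\<Oplus>j\<in>{1..d}. c j \<oplus> f i j \<otimes> g j l)"
      using c cc fc gc True by (intro finsum_cong') auto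
    also have "\<dots> = finsum R c {1..d} \<oplus> (\<Oplus>j\<in>{1..d}. f i j \<otimes> g j l)"
      using cc fc gc True by (intro finsum_addf) auto
    finally have e: "(\<Oplus>j\<in>{1..d}. coset_rep (mk f i j) \<otimes> coset_rep (mk g j l)) = finsum R c {1..d} \<oplus> (\<Oplus>j\<in>{1..d}. f i j \<otimes> g j l)" .
    have "finsum R c {1..d} \<in> I i (d+1)" using c(1) True by (intro finsum_ideal[OF ideal_I[of i "d+1"]]) auto
    moreover have "(\<Oplus>j\<in>{1..d}. f i j \<otimes> g j l) \<in> carrier R" using fc gc True by (intro finsum_closed) auto
    ultimately show ?thesis unfolding e using coset_absorb[OF ideal_I[of i "d+1"]] True unfolding mkm_def by auto
  qed
qed

end




context dsys begin

definition okf :: "(nat \<Rightarrow> nat \<Rightarrow> 'a) \<Rightarrow> bool" where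
  "okf f \<longleftrightarrow> (\<forall>i\<in>{1..d}. \<forall>j\<in>{1..d}. f i j \<in> I i j)"

lemma okfD: "okf f \<Longrightarrow> i \<in> {1..d} \<Longrightarrow> j \<in> {1..d} \<Longrightarrow> f i j \<in> I i j"
  unfolding okf_def by blast
lemma okfC: "okf f \<Longrightarrow> i \<in> {1..d} \<Longrightarrow> j \<in> {1..d} \<Longrightarrow> f i j \<in> carrier R"
  by (rule I_carr[OF _ _ okfD]) auto
lemma okfI: "(\<And>i j. i \<in> {1..d} \<Longrightarrow> j \<in> {1..d} \<Longrightarrow> f i j \<in> I i j) \<Longrightarrow> okf f"
  unfolding okf_def by blast

lemma carrier_E':
  assumes "M \<in> carrier A" obtains f where "M = mk f" "okf f"
  using carrier_E[OF assms] okfI by metis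

lemma mkC: "okf f \<Longrightarrow> mk f \<in> carrier A"
  by (rule mk_carrier) (rule okfD)

lemma I_add: "i \<in> {1..d+1} \<Longrightarrow> j \<in> {1..d+1} \<Longrightarrow> x \<in> I i j \<Longrightarrow> y \<in> I i j \<Longrightarrow> x \<oplus> y \<in> I i j"
  by (rule additive_subgroup.a_closed[OF ideal.axioms(1)[OF ideal_I]])
lemma I_zero: "i \<in> {1..d+1} \<Longrightarrow> j \<in> {1..d+1} \<Longrightarrow> \<zero> \<in> I i j"
  by (rule additive_subgroup.zero_closed[OF ideal.axioms(1)[OF ideal_I]])
lemma I_neg: "i \<in> {1..d+1} \<Longrightarrow> j \<in> {1..d+1} \<Longrightarrow> x \<in> I i j \<Longrightarrow> \<ominus> x \<in> I i j"
  by (rule additive_subgroup.a_inv_closed[OF ideal.axioms(1)[OF ideal_I]])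

lemma sum_in:
  assumes f: "okf f" and g: "okf g" and i: "i \<in> {1..d}" and l: "l \<in> {1..d}"
  shows "(\<Oplus>j\<in>{1..d}. f i j \<otimes> g j l) \<in> I i l"
proof (rule finsum_ideal[OF ideal_I])
  show "\<forall>j\<in>{1..d}. f i j \<otimes> g j l \<in> I i l"
  proof
    fix j assume j: "j \<in> {1..d}"
    show "f i j \<otimes> g j l \<in> I i l" by (rule prod_in[of i j l]) (use i j l okfD[OF f] okfD[OF g] in auto)
  qed
qed (use i l in auto)

lemma okf_mult: "okf f \<Longrightarrow> okf g \<Longrightarrow> okf (\<lambda>i l. \<Oplus>j\<in>{1..d}. f i j \<otimes> g j l)"
  by (rule okfI) (rule sum_in)

lemma okf_add: "okf f \<Longrightarrow> okf g \<Longrightarrow> okf (\<lambda>i j. f i j \<oplus> g i j)"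
  by (rule okfI) (rule I_add, simp, simp, erule (2) okfD, erule (2) okfD)

lemma okf_neg: "okf f \<Longrightarrow> okf (\<lambda>i j. \<ominus> f i j)"
  by (rule okfI) (rule I_neg, simp, simp, erule (2) okfD)

lemma okf_zero: "okf (\<lambda>i j. \<zero>)"
  by (rule okfI) (rule I_zero, simp, simp)

lemma okf_one: "okf (\<lambda>i j. if i = j then \<one> else \<zero>)"
proof (rule okfI)
  fix i j assume "i \<in> {1..d}" "j \<in> {1..d}"
  thus "(if i = j then \<one> else \<zero>) \<in> I i j" using I_full[of i j] I_zero[of i j] by auto
qed

lemma carrierA: "carrier A = tiled_carrier R d I" by (simp add: tiled_alg_def)
lemma zeroA: "\<zero>\<^bsub>A\<^esub> = mk (\<lambda>i j. \<zero>)"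
  unfolding tiled_alg_def tiled_diag_def mkm_def by simp
lemma oneA: "\<one>\<^bsub>A\<^esub> = mk (\<lambda>i j. if i = j then \<one> else \<zero>)"
  unfolding tiled_alg_def tiled_diag_def mkm_def by simp

lemma addA: "okf f \<Longrightarrow> okf g \<Longrightarrow> mk f \<oplus>\<^bsub>A\<^esub> mk g = mk (\<lambda>i j. f i j \<oplus> g i j)"
  unfolding tiled_alg_def by simp (rule add_mk, auto intro: okfC)

lemma multA_eq: "mult A = tiled_mult R d I" by (simp add: tiled_alg_def)
lemma multA: "okf f \<Longrightarrow> okf g \<Longrightarrow> mk f \<otimes>\<^bsub>A\<^esub> mk g = mk (\<lambda>i l. \<Oplus>j\<in>{1..d}. f i j \<otimes> g j l)"
  unfolding multA_eq by (rule mult_mk) (erule (2) okfD)+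

lemma ring_A: "ring A"
proof (rule ringI)
  show "abelian_group A"
  proof (rule abelian_groupI)
    fix x y assume "x \<in> carrier A" "y \<in> carrier A"
    then obtain f g where "x = mk f" "okf f" "y = mk g" "okf g" by (metis carrier_E')
    thus "x \<oplus>\<^bsub>A\<^esub> y \<in> carrier A" by (simp add: addA mkC okf_add)
  next
    show "\<zero>\<^bsub>A\<^esub> \<in> carrier A" by (simp add: zeroA mkC okf_zero)
  next
    fix x y z assume "x \<in> carrier A" "y \<in> carrier A" "z \<in> carrier A"
    then obtain f g h where fgh: "x = mk f" "okf f" "y = mk g" "okf g" "z = mk h" "okf h" by (metis carrier_E')
    show "x \<oplus>\<^bsub>A\<^esub> y \<oplus>\<^bsub>A\<^esub> z = x \<oplus>\<^bsub>A\<^esub> (y \<oplus>\<^bsub>A\<^esub> z)"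
      using fgh by (simp add: addA okf_add) (rule mk_cong, simp add: a_assoc okfC)
  next
    fix x y assume "x \<in> carrier A" "y \<in> carrier A"
    then obtain f g where fg: "x = mk f" "okf f" "y = mk g" "okf g" by (metis carrier_E')
    show "x \<oplus>\<^bsub>A\<^esub> y = y \<oplus>\<^bsub>A\<^esub> x"
      using fg by (simp add: addA) (rule mk_cong, simp add: a_comm okfC)
  next
    fix x assume "x \<in> carrier A"
    then obtain f where f: "x = mk f" "okf f" by (metis carrier_E')
    show "\<zero>\<^bsub>A\<^esub> \<oplus>\<^bsub>A\<^esub> x = x"
      using f by (simp add: zeroA addA okf_zero) (rule mk_cong, simp add: okfC)
  next
    fix x assume "x \<in> carrier A"
    then obtain f where f: "x = mk f" "okf f" by (metis carrier_E')
    have "mk (\<lambda>i j. \<ominus> f i j) \<in> carrier A" using f by (simp add: mkC okf_neg)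
    moreover have "mk (\<lambda>i j. \<ominus> f i j) \<oplus>\<^bsub>A\<^esub> x = \<zero>\<^bsub>A\<^esub>"
      using f by (simp add: zeroA addA okf_neg) (rule mk_cong, simp add: okfC l_neg)
    ultimately show "\<exists>y\<in>carrier A. y \<oplus>\<^bsub>A\<^esub> x = \<zero>\<^bsub>A\<^esub>" by blast
  qed
next
  show "monoid A"
  proof (rule monoidI)
    fix x y assume "x \<in> carrier A" "y \<in> carrier A"
    then obtain f g where fg: "x = mk f" "okf f" "y = mk g" "okf g" by (metis carrier_E')
    thus "x \<otimes>\<^bsub>A\<^esub> y \<in> carrier A" using mkC[OF okf_mult[OF fg(2,4)]] multA[OF fg(2,4)] by simp
  next
    show "\<one>\<^bsub>A\<^esub> \<in> carrier A" by (simp add: oneA mkC okf_one)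
  next
    fix x y z assume "x \<in> carrier A" "y \<in> carrier A" "z \<in> carrier A"
    then obtain f g h where fgh: "x = mk f" "okf f" "y = mk g" "okf g" "z = mk h" "okf h" by (metis carrier_E')
    have e1: "x \<otimes>\<^bsub>A\<^esub> y \<otimes>\<^bsub>A\<^esub> z = mk (\<lambda>i m. \<Oplus>l\<in>{1..d}. (\<Oplus>j\<in>{1..d}. f i j \<otimes> g j l) \<otimes> h l m)"
      by (simp only: fgh(1,3,5) multA[OF fgh(2,4)] multA[OF okf_mult[OF fgh(2,4)] fgh(6)])
    have e2: "x \<otimes>\<^bsub>A\<^esub> (y \<otimes>\<^bsub>A\<^esub> z) = mk (\<lambda>i m. \<Oplus>j\<in>{1..d}. f i j \<otimes> (\<Oplus>l\<in>{1..d}. g j l \<otimes> h l m))"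
      by (simp only: fgh(1,3,5) multA[OF fgh(4,6)] multA[OF fgh(2) okf_mult[OF fgh(4,6)]])
    show "x \<otimes>\<^bsub>A\<^esub> y \<otimes>\<^bsub>A\<^esub> z = x \<otimes>\<^bsub>A\<^esub> (y \<otimes>\<^bsub>A\<^esub> z)"
      unfolding e1 e2
    proof (intro mk_cong)
      fix i m assume im: "i \<in> {1..d}" "m \<in> {1..d}"
      have fc: "\<And>i j. i \<in> {1..d} \<Longrightarrow> j \<in> {1..d} \<Longrightarrow> f i j \<in> carrier R" using fgh okfC by blast
      have gc: "\<And>i j. i \<in> {1..d} \<Longrightarrow> j \<in> {1..d} \<Longrightarrow> g i j \<in> carrier R" using fgh okfC by blast
      have hc: "\<And>i j. i \<in> {1..d} \<Longrightarrow> j \<in> {1..d} \<Longrightarrow> h i j \<in> carrier R" using fgh okfC by blast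
      have "(\<Oplus>l\<in>{1..d}. (\<Oplus>j\<in>{1..d}. f i j \<otimes> g j l) \<otimes> h l m)
          = (\<Oplus>l\<in>{1..d}. \<Oplus>j\<in>{1..d}. f i j \<otimes> g j l \<otimes> h l m)"
        using im fc gc hc by (intro finsum_cong') (auto simp: finsum_ldistr intro!: finsum_closed)
      also have "\<dots> = (\<Oplus>j\<in>{1..d}. \<Oplus>l\<in>{1..d}. f i j \<otimes> g j l \<otimes> h l m)"
        using im fc gc hc by (intro finsum_swap) auto
      also have "\<dots> = (\<Oplus>j\<in>{1..d}. \<Oplus>l\<in>{1..d}. f i j \<otimes> (g j l \<otimes> h l m))"
        using im fc gc hc by (auto intro!: finsum_cong' finsum_closed simp: m_assoc)
      also have "\<dots> = (\<Oplus>j\<in>{1..d}. f i j \<otimes> (\<Oplus>l\<in>{1..d}. g j l \<otimes> h l m))"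
        using im fc gc hc by (intro finsum_cong') (auto simp: finsum_rdistr intro!: finsum_closed)
      finally show "(\<Oplus>l\<in>{1..d}. (\<Oplus>j\<in>{1..d}. f i j \<otimes> g j l) \<otimes> h l m)
          = (\<Oplus>j\<in>{1..d}. f i j \<otimes> (\<Oplus>l\<in>{1..d}. g j l \<otimes> h l m))" .
    qed
  next
    fix x assume "x \<in> carrier A"
    then obtain f where f: "x = mk f" "okf f" by (metis carrier_E')
    show "\<one>\<^bsub>A\<^esub> \<otimes>\<^bsub>A\<^esub> x = x"
      unfolding f(1) oneA multA[OF okf_one f(2)]
    proof (intro mk_cong)
      fix i l assume il: "i \<in> {1..d}" "l \<in> {1..d}"
      show "(\<Oplus>j\<in>{1..d}. (if i = j then \<one> else \<zero>) \<otimes> f j l) = f i l"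
        using il f by (subst finsum_single[of _ i]) (auto simp: okfC)
    qed
  next
    fix x assume "x \<in> carrier A"
    then obtain f where f: "x = mk f" "okf f" by (metis carrier_E')
    show "x \<otimes>\<^bsub>A\<^esub> \<one>\<^bsub>A\<^esub> = x"
      unfolding f(1) oneA multA[OF f(2) okf_one]
    proof (intro mk_cong)
      fix i l assume il: "i \<in> {1..d}" "l \<in> {1..d}"
      show "(\<Oplus>j\<in>{1..d}. f i j \<otimes> (if j = l then \<one> else \<zero>)) = f i l"
        using il f by (subst finsum_single[of _ l]) (auto simp: okfC)
    qed
  qed
next
  fix x y z assume "x \<in> carrier A" "y \<in> carrier A" "z \<in> carrier A"
  then obtain f g h where fgh: "x = mk f" "okf f" "y = mk g" "okf g" "z = mk h" "okf h" by (metis carrier_E')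
  show "(x \<oplus>\<^bsub>A\<^esub> y) \<otimes>\<^bsub>A\<^esub> z = x \<otimes>\<^bsub>A\<^esub> z \<oplus>\<^bsub>A\<^esub> y \<otimes>\<^bsub>A\<^esub> z"
    unfolding fgh(1,3,5) addA[OF fgh(2,4)] multA[OF okf_add[OF fgh(2,4)] fgh(6)] multA[OF fgh(2,6)] multA[OF fgh(4,6)]
      addA[OF okf_mult[OF fgh(2,6)] okf_mult[OF fgh(4,6)]]
  proof (intro mk_cong)
    fix i l assume il: "i \<in> {1..d}" "l \<in> {1..d}"
    show "(\<Oplus>j\<in>{1..d}. (f i j \<oplus> g i j) \<otimes> h j l) = (\<Oplus>j\<in>{1..d}. f i j \<otimes> h j l) \<oplus> (\<Oplus>j\<in>{1..d}. g i j \<otimes> h j l)"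
    proof -
      have "(\<Oplus>j\<in>{1..d}. (f i j \<oplus> g i j) \<otimes> h j l) = (\<Oplus>j\<in>{1..d}. f i j \<otimes> h j l \<oplus> g i j \<otimes> h j l)"
        using il fgh by (intro finsum_cong') (auto simp: okfC l_distr)
      also have "\<dots> = (\<Oplus>j\<in>{1..d}. f i j \<otimes> h j l) \<oplus> (\<Oplus>j\<in>{1..d}. g i j \<otimes> h j l)"
        using il fgh by (intro finsum_addf) (auto simp: okfC)
      finally show ?thesis .
    qed
  qed
  show "z \<otimes>\<^bsub>A\<^esub> (x \<oplus>\<^bsub>A\<^esub> y) = z \<otimes>\<^bsub>A\<^esub> x \<oplus>\<^bsub>A\<^esub> z \<otimes>\<^bsub>A\<^esub> y"
    unfolding fgh(1,3,5) addA[OF fgh(2,4)] multA[OF fgh(6) okf_add[OF fgh(2,4)]] multA[OF fgh(6,2)] multA[OF fgh(6,4)]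
      addA[OF okf_mult[OF fgh(6,2)] okf_mult[OF fgh(6,4)]]
  proof (intro mk_cong)
    fix i l assume il: "i \<in> {1..d}" "l \<in> {1..d}"
    show "(\<Oplus>j\<in>{1..d}. h i j \<otimes> (f j l \<oplus> g j l)) = (\<Oplus>j\<in>{1..d}. h i j \<otimes> f j l) \<oplus> (\<Oplus>j\<in>{1..d}. h i j \<otimes> g j l)"
    proof -
      have "(\<Oplus>j\<in>{1..d}. h i j \<otimes> (f j l \<oplus> g j l)) = (\<Oplus>j\<in>{1..d}. h i j \<otimes> f j l \<oplus> h i j \<otimes> g j l)"
        using il fgh by (intro finsum_cong') (auto simp: okfC r_distr)
      also have "\<dots> = (\<Oplus>j\<in>{1..d}. h i j \<otimes> f j l) \<oplus> (\<Oplus>j\<in>{1..d}. h i j \<otimes> g j l)"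
        using il fgh by (intro finsum_addf) (auto simp: okfC)
      finally show ?thesis .
    qed
  qed
qed

end



context dsys begin

definition sg :: "nat \<Rightarrow> nat \<Rightarrow> 'a \<Rightarrow> nat \<Rightarrow> nat \<Rightarrow> 'a" where
  "sg a b x = (\<lambda>i j. if i = a \<and> j = b then x else \<zero>)"

lemma okf_sg: "a \<in> {1..d} \<Longrightarrow> b \<in> {1..d} \<Longrightarrow> x \<in> I a b \<Longrightarrow> okf (sg a b x)"
  unfolding sg_def by (rule okfI) (auto intro: I_zero)

lemma idemA: "tiled_idem R d I k = mk (sg k k \<one>)"
  unfolding tiled_idem_def tiled_diag_def mkm_def sg_def by simp

lemma mult_sg_right:
  assumes f: "okf f" and b: "b \<in> {1..d}" and c: "c \<in> {1..d}" and y: "y \<in> I b c"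
  shows "mk f \<otimes>\<^bsub>A\<^esub> mk (sg b c y) = mk (\<lambda>i l. if l = c then f i b \<otimes> y else \<zero>)"
  unfolding multA[OF f okf_sg[OF b c y]]
proof (rule mk_cong)
  fix i l assume il: "i \<in> {1..d}" "l \<in> {1..d}"
  have yc: "y \<in> carrier R" using I_carr[of b c] b c y by auto
  have "(\<Oplus>j\<in>{1..d}. f i j \<otimes> sg b c y j l) = f i b \<otimes> sg b c y b l"
    using il b yc by (intro finsum_single) (auto simp: sg_def okfC[OF f])
  thus "(\<Oplus>j\<in>{1..d}. f i j \<otimes> sg b c y j l) = (if l = c then f i b \<otimes> y else \<zero>)"
    using il b yc okfC[OF f, of i b] by (auto simp: sg_def)
qed

lemma mult_sg_left:
  assumes g: "okf g" and a: "a \<in> {1..d}" and b: "b \<in> {1..d}" and x: "x \<in> I a b"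
  shows "mk (sg a b x) \<otimes>\<^bsub>A\<^esub> mk g = mk (\<lambda>i l. if i = a then x \<otimes> g b l else \<zero>)"
  unfolding multA[OF okf_sg[OF a b x] g]
proof (rule mk_cong)
  fix i l assume il: "i \<in> {1..d}" "l \<in> {1..d}"
  have xc: "x \<in> carrier R" using I_carr[of a b] a b x by auto
  have "(\<Oplus>j\<in>{1..d}. sg a b x i j \<otimes> g j l) = sg a b x i b \<otimes> g b l"
    using il b xc by (intro finsum_single) (auto simp: sg_def okfC[OF g])
  thus "(\<Oplus>j\<in>{1..d}. sg a b x i j \<otimes> g j l) = (if i = a then x \<otimes> g b l else \<zero>)"
    using il b xc okfC[OF g, of b l] by (auto simp: sg_def)
qed

end

lemma d_system_restrict:
  assumes "d_system R (Suc n) I" shows "d_system R n I"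
proof -
  have s: "{1..n+1} \<subseteq> {1..Suc n+1}" by auto
  show ?thesis using assms s unfolding d_system_def by (meson subsetD)
qed




locale dsysS = dsys +
  fixes n :: nat
  assumes dn: "d = Suc n"
begin

sublocale S: dsys R n I
  by unfold_locales (rule d_system_restrict, use ds dn in simp)

definition phi :: "(nat \<Rightarrow> nat \<Rightarrow> 'a set) \<Rightarrow> (nat \<Rightarrow> nat \<Rightarrow> 'a set)" where
  "phi M = mkm R n I (\<lambda>i j. coset_rep (M i j))"

lemma okf_S: "okf f \<Longrightarrow> S.okf f"
  by (rule S.okfI) (rule okfD, auto simp: dn)

lemma phi_mk: assumes f: "okf f" shows "phi (mk f) = S.mk f"
  unfolding phi_def
proof (subst S.mk_eq_iff)
  show "\<forall>i\<in>{1..n}. \<forall>j\<in>{1..n}. coset_rep (mk f i j) \<ominus> f i j \<in> I i (n + 1)"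
  proof (intro ballI)
    fix i j assume ij: "i \<in> {1..n}" "j \<in> {1..n}"
    have ij': "i \<in> {1..d}" "j \<in> {1..d}" using ij dn by auto
    have fc: "f i j \<in> carrier R" using okfC[OF f ij'] .
    obtain u where u: "u \<in> I i (d+1)" "coset_rep (I i (d+1) +> f i j) = u \<oplus> f i j"
      using rep_decomp[OF ideal_I[of i "d+1"] fc] ij' by auto
    have uc: "u \<in> carrier R" using I_carr[of i "d+1" u] u ij' by auto
    have "u \<in> I i (n+1)" using I_mono[of i "n+1" "d+1" u] u ij' dn by auto
    moreover have "coset_rep (mk f i j) \<ominus> f i j = u"
      using u ij' uc fc unfolding mkm_def by (simp add: minus_eq a_assoc r_neg)
    ultimately show "coset_rep (mk f i j) \<ominus> f i j \<in> I i (n + 1)" by simp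
  qed
next
  fix i j assume ij: "i \<in> {1..n}" "j \<in> {1..n}"
  have ij': "i \<in> {1..d}" "j \<in> {1..d}" using ij dn by auto
  have fc: "f i j \<in> carrier R" using okfC[OF f ij'] .
  obtain u where u: "u \<in> I i (d+1)" "coset_rep (I i (d+1) +> f i j) = u \<oplus> f i j"
    using rep_decomp[OF ideal_I[of i "d+1"] fc] ij' by auto
  have uc: "u \<in> carrier R" using I_carr[of i "d+1" u] u ij' by auto
  show "coset_rep (mk f i j) \<in> carrier R" using u uc fc ij' unfolding mkm_def by simp
next
  fix i j assume ij: "i \<in> {1..n}" "j \<in> {1..n}"
  have ij': "i \<in> {1..d}" "j \<in> {1..d}" using ij dn by auto
  show "f i j \<in> carrier R" using okfC[OF f ij'] .
qed

lemma phi_hom: "ring_hom_ring A S.A phi"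
proof (rule ring_hom_ringI[OF ring_A S.ring_A])
  fix x assume "x \<in> carrier A"
  then obtain f where f: "x = mk f" "okf f" by (metis carrier_E')
  show "phi x \<in> carrier S.A" unfolding f(1) phi_mk[OF f(2)] by (rule S.mkC, rule okf_S, rule f(2))
next
  fix x y assume "x \<in> carrier A" "y \<in> carrier A"
  then obtain f g where fg: "x = mk f" "okf f" "y = mk g" "okf g" by (metis carrier_E')
  show "phi (x \<oplus>\<^bsub>A\<^esub> y) = phi x \<oplus>\<^bsub>S.A\<^esub> phi y"
    unfolding fg(1,3) addA[OF fg(2,4)] phi_mk[OF okf_add[OF fg(2,4)]] phi_mk[OF fg(2)] phi_mk[OF fg(4)]
      S.addA[OF okf_S[OF fg(2)] okf_S[OF fg(4)]] ..
  have fc: "\<And>i j. i \<in> {1..d} \<Longrightarrow> j \<in> {1..d} \<Longrightarrow> f i j \<in> carrier R" using fg okfC by blast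
  have gc: "\<And>i j. i \<in> {1..d} \<Longrightarrow> j \<in> {1..d} \<Longrightarrow> g i j \<in> carrier R" using fg okfC by blast
  show "phi (x \<otimes>\<^bsub>A\<^esub> y) = phi x \<otimes>\<^bsub>S.A\<^esub> phi y"
    unfolding fg(1,3) multA[OF fg(2,4)] phi_mk[OF okf_mult[OF fg(2,4)]] phi_mk[OF fg(2)] phi_mk[OF fg(4)]
      S.multA[OF okf_S[OF fg(2)] okf_S[OF fg(4)]]
  proof (rule iffD2[OF S.mk_eq_iff])
    fix i l assume il: "i \<in> {1..n}" "l \<in> {1..n}"
    have il': "i \<in> {1..d}" "l \<in> {1..d}" using il dn by auto
    show "(\<Oplus>j\<in>{1..d}. f i j \<otimes> g j l) \<in> carrier R" using fc gc il' by (intro finsum_closed) auto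
  next
    fix i l assume il: "i \<in> {1..n}" "l \<in> {1..n}"
    have il': "i \<in> {1..d}" "l \<in> {1..d}" using il dn by auto
    show "(\<Oplus>j\<in>{1..n}. f i j \<otimes> g j l) \<in> carrier R" using fc gc il' dn by (intro finsum_closed) auto
  next
    show "\<forall>i\<in>{1..n}. \<forall>l\<in>{1..n}. (\<Oplus>j\<in>{1..d}. f i j \<otimes> g j l) \<ominus> (\<Oplus>j\<in>{1..n}. f i j \<otimes> g j l) \<in> I i (n+1)"
    proof (intro ballI)
      fix i l assume il: "i \<in> {1..n}" "l \<in> {1..n}"
      have il': "i \<in> {1..d}" "l \<in> {1..d}" using il dn by auto
      have dd: "{1..d} = insert d {1..n}" using dn by auto
      let ?t = "\<lambda>j. f i j \<otimes> g j l"
      have tc: "\<And>j. j \<in> {1..d} \<Longrightarrow> ?t j \<in> carrier R" using fc gc il' by auto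
      have sc: "(\<Oplus>j\<in>{1..n}. ?t j) \<in> carrier R" using tc dn by (intro finsum_closed) auto
      have "(\<Oplus>j\<in>{1..d}. ?t j) = ?t d \<oplus> (\<Oplus>j\<in>{1..n}. ?t j)"
        unfolding dd using tc dd dn by (intro finsum_insert) auto
      hence "(\<Oplus>j\<in>{1..d}. ?t j) \<ominus> (\<Oplus>j\<in>{1..n}. ?t j) = ?t d"
        using tc[of d] sc dn by (simp add: minus_eq a_assoc r_neg)
      moreover have "?t d \<in> I i (n+1)"
      proof -
        have "f i d \<in> I i (n+1)" using okfD[OF fg(2) il'(1), of d] dn by auto
        thus ?thesis using ideal.I_r_closed[OF ideal_I[of i "n+1"]] gc[of d l] il' dn by auto
      qed
      ultimately show "(\<Oplus>j\<in>{1..d}. ?t j) \<ominus> (\<Oplus>j\<in>{1..n}. ?t j) \<in> I i (n+1)" by simp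
    qed
  qed
next
  show "phi \<one>\<^bsub>A\<^esub> = \<one>\<^bsub>S.A\<^esub>"
    unfolding oneA S.oneA phi_mk[OF okf_one] ..
qed

lemma phi_surj: "phi ` carrier A = carrier S.A"
proof
  show "phi ` carrier A \<subseteq> carrier S.A"
    by (auto intro: ring_hom_closed[OF ring_hom_ring.homh[OF phi_hom]])
next
  show "carrier S.A \<subseteq> phi ` carrier A"
  proof
    fix N assume "N \<in> carrier S.A"
    then obtain f where f: "N = S.mk f" "S.okf f" by (metis S.carrier_E')
    define f' where "f' = (\<lambda>i j. if i \<le> n \<and> j \<le> n then f i j else \<zero>)"
    have ok: "okf f'"
    proof (rule okfI)
      fix i j assume ij: "i \<in> {1..d}" "j \<in> {1..d}"
      show "f' i j \<in> I i j"
      proof (cases "i \<le> n \<and> j \<le> n")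
        case True
        hence "i \<in> {1..n}" "j \<in> {1..n}" using ij by auto
        thus ?thesis using S.okfD[OF f(2)] True unfolding f'_def by simp
      next
        case False
        have "\<zero> \<in> I i j" by (rule I_zero) (use ij in auto)
        thus ?thesis using False unfolding f'_def by auto
      qed
    qed
    have "phi (mk f') = N" unfolding phi_mk[OF ok] f(1) by (rule S.mk_cong) (simp add: f'_def)
    thus "N \<in> phi ` carrier A" using mkC[OF ok] by blast
  qed
qed

definition Gset where "Gset = mk ` {f. okf f \<and> (\<forall>i\<in>{1..d}. \<forall>j\<in>{1..d}. f i j \<in> I i d)}"

lemma kernel_G: "a_kernel A S.A phi = Gset"
proof
  show "a_kernel A S.A phi \<subseteq> Gset"
  proof
    fix M assume "M \<in> a_kernel A S.A phi"
    hence M: "M \<in> carrier A" "phi M = \<zero>\<^bsub>S.A\<^esub>" unfolding a_kernel_def' by auto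
    then obtain f where f: "M = mk f" "okf f" by (metis carrier_E')
    have "S.mk f = S.mk (\<lambda>i j. \<zero>)" using M(2) unfolding f(1) phi_mk[OF f(2)] S.zeroA .
    hence z: "\<forall>i\<in>{1..n}. \<forall>j\<in>{1..n}. f i j \<ominus> \<zero> \<in> I i (n+1)"
      using S.mk_eq_iff S.okfC[OF okf_S[OF f(2)]] by simp
    have "\<forall>i\<in>{1..d}. \<forall>j\<in>{1..d}. f i j \<in> I i d"
    proof (intro ballI)
      fix i j assume ij: "i \<in> {1..d}" "j \<in> {1..d}"
      show "f i j \<in> I i d"
      proof (cases "i = d")
        case True thus ?thesis using okfC[OF f(2) ij] I_full[of d d] dn by auto
      next
        case False
        show ?thesis
        proof (cases "j = d")
          case True thus ?thesis using okfD[OF f(2) ij] by simp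
        next
          case False
          hence "f i j \<ominus> \<zero> \<in> I i (n+1)" using z ij \<open>i \<noteq> d\<close> dn by auto
          thus ?thesis using okfC[OF f(2) ij] dn by (simp add: minus_eq)
        qed
      qed
    qed
    thus "M \<in> Gset" unfolding Gset_def f(1) using f(2) by blast
  qed
next
  show "Gset \<subseteq> a_kernel A S.A phi"
  proof
    fix M assume "M \<in> Gset"
    then obtain f where f: "M = mk f" "okf f" "\<forall>i\<in>{1..d}. \<forall>j\<in>{1..d}. f i j \<in> I i d"
      unfolding Gset_def by blast
    have "phi M = S.mk (\<lambda>i j. \<zero>)"
      unfolding f(1) phi_mk[OF f(2)]
    proof (rule iffD2[OF S.mk_eq_iff])
      fix i j assume ij: "i \<in> {1..n}" "j \<in> {1..n}"
      have ij': "i \<in> {1..d}" "j \<in> {1..d}" using ij dn by auto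
      show "f i j \<in> carrier R" using okfC[OF f(2) ij'] .
    next
      show "\<forall>i\<in>{1..n}. \<forall>j\<in>{1..n}. f i j \<ominus> \<zero> \<in> I i (n + 1)"
      proof (intro ballI)
        fix i j assume ij: "i \<in> {1..n}" "j \<in> {1..n}"
        have ij': "i \<in> {1..d}" "j \<in> {1..d}" using ij dn by auto
        show "f i j \<ominus> \<zero> \<in> I i (n + 1)" using f(3) ij' okfC[OF f(2) ij'] dn by (simp add: minus_eq)
      qed
    qed simp
    thus "M \<in> a_kernel A S.A phi" unfolding a_kernel_def' S.zeroA using mkC[OF f(2)] f(1) by simp
  qed
qed

end



context dsys begin

lemma carrier_out: "M \<in> carrier A \<Longrightarrow> \<not> (i \<in> {1..d} \<and> j \<in> {1..d}) \<Longrightarrow> M i j = {}"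
  unfolding tiled_alg_def tiled_carrier_def by auto

lemma mk_at: "i \<in> {1..d} \<Longrightarrow> j \<in> {1..d} \<Longrightarrow> mk f i j = I i (d+1) +> f i j"
  unfolding mkm_def by simp

end

context dsysS begin

abbreviation "E \<equiv> tiled_idem R d I d"

lemma dR: "d \<in> {1..d}" using dn by auto

lemma ideal_G: "ideal Gset A"
  using ring_hom_ring.kernel_is_ideal[OF phi_hom] kernel_G by simp

lemma one_Idd: "\<one> \<in> I d d" using I_full[of d d] dn by auto

lemma E_carr: "E \<in> carrier A" unfolding idemA by (rule mkC, rule okf_sg[OF dR dR one_Idd])

lemma E_G: "E \<in> Gset"
proof -
  have "\<forall>i\<in>{1..d}. \<forall>j\<in>{1..d}. sg d d \<one> i j \<in> I i d"
  proof (intro ballI)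
    fix i j assume ij: "i \<in> {1..d}" "j \<in> {1..d}"
    show "sg d d \<one> i j \<in> I i d" using one_Idd I_zero[of i d] ij dn unfolding sg_def by auto
  qed
  thus ?thesis unfolding idemA Gset_def using okf_sg[OF dR dR one_Idd] by blast
qed

lemma gen_eq: "genideal A {E} = Gset"
proof
  show "genideal A {E} \<subseteq> Gset"
    using ring.genideal_minimal[OF ring_A ideal_G] E_G by blast
next
  show "Gset \<subseteq> genideal A {E}"
  proof
    fix M assume "M \<in> Gset"
    then obtain f where f: "M = mk f" "okf f" "\<forall>i\<in>{1..d}. \<forall>j\<in>{1..d}. f i j \<in> I i d"
      unfolding Gset_def by blast
    let ?J = "genideal A {E}"
    have idJ: "ideal ?J A" using ring.genideal_ideal[OF ring_A] E_carr by simp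
    have EJ: "E \<in> ?J" using ring.genideal_self'[OF ring_A E_carr] .
    have sgJ: "mk (sg a b (f a b)) \<in> ?J" if ab: "a \<in> {1..d}" "b \<in> {1..d}" for a b
    proof -
      have x: "f a b \<in> I a d" using f(3) ab by blast
      have xc: "f a b \<in> carrier R" using okfC[OF f(2) ab] .
      have ok1: "okf (sg a d (f a b))" by (rule okf_sg[OF ab(1) dR x])
      have "mk (sg a d (f a b)) \<otimes>\<^bsub>A\<^esub> E = mk (sg a d (f a b))"
        unfolding idemA mult_sg_right[OF ok1 dR dR one_Idd]
        by (rule mk_cong) (auto simp: sg_def xc)
      hence s1: "mk (sg a d (f a b)) \<in> ?J"
        using ideal.I_l_closed[OF idJ EJ mkC[OF ok1]] by simp
      have one_db: "\<one> \<in> I d b" using I_full[of d b] ab dn by auto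
      have "mk (sg a d (f a b)) \<otimes>\<^bsub>A\<^esub> mk (sg d b \<one>) = mk (sg a b (f a b))"
        unfolding mult_sg_right[OF ok1 dR ab(2) one_db]
        by (rule mk_cong) (auto simp: sg_def xc)
      moreover have "mk (sg a d (f a b)) \<otimes>\<^bsub>A\<^esub> mk (sg d b \<one>) \<in> ?J"
        using ideal.I_r_closed[OF idJ s1 mkC[OF okf_sg[OF dR ab(2) one_db]]] .
      ultimately show ?thesis by simp
    qed
    have fc: "\<And>i j. i \<in> {1..d} \<Longrightarrow> j \<in> {1..d} \<Longrightarrow> f i j \<in> carrier R" using okfC[OF f(2)] .
    have main: "P \<subseteq> {1..d} \<times> {1..d} \<Longrightarrow> mk (\<lambda>i j. if (i, j) \<in> P then f i j else \<zero>) \<in> ?J"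
      if fin: "finite P" for P
      using fin
    proof (induct P rule: finite_induct)
      case empty
      have "\<zero>\<^bsub>A\<^esub> \<in> ?J" using additive_subgroup.zero_closed[OF ideal.axioms(1)[OF idJ]] .
      thus ?case unfolding zeroA by simp
    next
      case (insert p P)
      obtain a b where p: "p = (a, b)" by (cases p)
      have ab: "a \<in> {1..d}" "b \<in> {1..d}" using insert(4) p by auto
      have okP: "okf (\<lambda>i j. if (i, j) \<in> P then f i j else \<zero>)"
      proof (rule okfI)
        fix i j assume ij: "i \<in> {1..d}" "j \<in> {1..d}"
        show "(if (i, j) \<in> P then f i j else \<zero>) \<in> I i j" using okfD[OF f(2) ij] I_zero[of i j] ij by auto
      qed
      have xab: "f a b \<in> I a b" using okfD[OF f(2) ab] .
      have "mk (\<lambda>i j. if (i, j) \<in> insert p P then f i j else \<zero>) =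
            mk (\<lambda>i j. if (i, j) \<in> P then f i j else \<zero>) \<oplus>\<^bsub>A\<^esub> mk (sg a b (f a b))"
        unfolding addA[OF okP okf_sg[OF ab xab]]
      proof (rule mk_cong)
        fix i j assume ij: "i \<in> {1..d}" "j \<in> {1..d}"
        show "(if (i, j) \<in> insert p P then f i j else \<zero>) =
            (if (i, j) \<in> P then f i j else \<zero>) \<oplus> sg a b (f a b) i j"
          using insert(2) p fc[OF ij] unfolding sg_def by auto
      qed
      moreover have "mk (\<lambda>i j. if (i, j) \<in> P then f i j else \<zero>) \<in> ?J" using insert by auto
      ultimately show ?case
        using additive_subgroup.a_closed[OF ideal.axioms(1)[OF idJ]] sgJ[OF ab] by simp
    qed
    have "mk (\<lambda>i j. if (i, j) \<in> {1..d} \<times> {1..d} then f i j else \<zero>) \<in> ?J" by (rule main) auto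
    moreover have "mk (\<lambda>i j. if (i, j) \<in> {1..d} \<times> {1..d} then f i j else \<zero>) = M"
      unfolding f(1) by (rule mk_cong) auto
    ultimately show "M \<in> ?J" by simp
  qed
qed

end



context dsysS begin

definition Aed where "Aed = {a \<otimes>\<^bsub>A\<^esub> E | a. a \<in> carrier A}"

definition col :: "(nat \<Rightarrow> 'a) \<Rightarrow> nat \<Rightarrow> nat \<Rightarrow> 'a" where
  "col g = (\<lambda>i l. if l = d then g i else \<zero>)"

lemma okf_col: "(\<And>i. i \<in> {1..d} \<Longrightarrow> g i \<in> I i d) \<Longrightarrow> okf (col g)"
  unfolding col_def by (rule okfI) (auto intro: I_zero)

lemma Aed_E: assumes "z \<in> Aed"
  shows "z \<in> carrier A" "\<And>i l. i \<in> {1..d} \<Longrightarrow> l \<in> {1..d} \<Longrightarrow> l \<noteq> d \<Longrightarrow> z i l = I i (d+1) +> \<zero>"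
proof -
  obtain a where a: "z = a \<otimes>\<^bsub>A\<^esub> E" "a \<in> carrier A" using assms unfolding Aed_def by blast
  then obtain f where f: "a = mk f" "okf f" by (metis carrier_E')
  show "z \<in> carrier A" using a E_carr monoid.m_closed[OF ring.is_monoid[OF ring_A]] by simp
  have "z = mk (\<lambda>i l. if l = d then f i d \<otimes> \<one> else \<zero>)"
    using a(1) unfolding f(1) idemA mult_sg_right[OF f(2) dR dR one_Idd] .
  thus "\<And>i l. i \<in> {1..d} \<Longrightarrow> l \<in> {1..d} \<Longrightarrow> l \<noteq> d \<Longrightarrow> z i l = I i (d+1) +> \<zero>"
    by (simp add: mk_at)
qed

lemma Aed_I: assumes "\<And>i. i \<in> {1..d} \<Longrightarrow> g i \<in> I i d" shows "mk (col g) \<in> Aed"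
proof -
  have okc: "okf (col g)" by (rule okf_col) (rule assms)
  have "mk (col g) \<otimes>\<^bsub>A\<^esub> E = mk (col g)"
    unfolding idemA mult_sg_right[OF okc dR dR one_Idd]
  proof (rule mk_cong)
    fix i l assume il: "i \<in> {1..d}" "l \<in> {1..d}"
    have "g i \<in> carrier R" using assms[OF il(1)] I_carr[of i d] il dn by auto
    thus "(if l = d then col g i d \<otimes> \<one> else \<zero>) = col g i l" unfolding col_def by simp
  qed
  thus ?thesis unfolding Aed_def using mkC[OF okc] by force
qed

definition F where
  "F x = (\<lambda>k\<in>{1..d}. (\<lambda>i l. if i \<in> {1..d} \<and> l \<in> {1..d} then (if l = d then x i k else I i (d+1) +> \<zero>) else {}))"

lemma F_mk: "k \<in> {1..d} \<Longrightarrow> F (mk f) k = mk (col (\<lambda>i. f i k))"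
  unfolding F_def mkm_def col_def by (intro ext) auto

lemma F_at: "k \<in> {1..d} \<Longrightarrow> i \<in> {1..d} \<Longrightarrow> F x k i d = x i k"
  unfolding F_def using dR by simp

lemma G_E: assumes "x \<in> Gset"
  obtains f where "x = mk f" "okf f" "\<And>i j. i \<in> {1..d} \<Longrightarrow> j \<in> {1..d} \<Longrightarrow> f i j \<in> I i d"
  using assms unfolding Gset_def by blast

lemma part1: "left_module_iso A Gset (add A) (mult A) (dsum_power_carrier Aed d)
          (\<lambda>x y. \<lambda>k\<in>{1..d}. x k \<oplus>\<^bsub>A\<^esub> y k) (\<lambda>a x. \<lambda>k\<in>{1..d}. a \<otimes>\<^bsub>A\<^esub> x k) F"
  unfolding left_module_iso_def
proof (intro conjI ballI)
  show "bij_betw F Gset (dsum_power_carrier Aed d)"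
    unfolding bij_betw_def
  proof
    show "inj_on F Gset"
    proof (rule inj_onI)
      fix x y assume x: "x \<in> Gset" and y: "y \<in> Gset" and e: "F x = F y"
      have xc: "x \<in> carrier A" "y \<in> carrier A" using x y ideal.Icarr[OF ideal_G] by auto
      show "x = y"
      proof (intro ext)
        fix i k show "x i k = y i k"
        proof (cases "i \<in> {1..d} \<and> k \<in> {1..d}")
          case True
          have "F x k i d = F y k i d" using e by simp
          thus ?thesis using F_at True by simp
        next
          case False thus ?thesis using carrier_out[OF xc(1) False] carrier_out[OF xc(2) False] by simp
        qed
      qed
    qed
  next
    show "F ` Gset = dsum_power_carrier Aed d"
    proof
      show "F ` Gset \<subseteq> dsum_power_carrier Aed d"
      proof
        fix z assume "z \<in> F ` Gset"
        then obtain x where x: "x \<in> Gset" "z = F x" by blast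
        obtain f where f: "x = mk f" "okf f" "\<And>i j. i \<in> {1..d} \<Longrightarrow> j \<in> {1..d} \<Longrightarrow> f i j \<in> I i d"
          using G_E[OF x(1)] by metis
        show "z \<in> dsum_power_carrier Aed d"
          unfolding dsum_power_carrier_def x(2)
        proof (rule PiE_I)
          fix k assume k: "k \<in> {1..d}"
          show "F x k \<in> Aed" unfolding f(1) F_mk[OF k] by (rule Aed_I) (rule f(3)[OF _ k])
        next
          fix k assume "k \<notin> {1..d}" thus "F x k = undefined" unfolding F_def by auto
        qed
      qed
    next
      show "dsum_power_carrier Aed d \<subseteq> F ` Gset"
      proof
        fix z assume z: "z \<in> dsum_power_carrier Aed d"
        have zA: "\<And>k. k \<in> {1..d} \<Longrightarrow> z k \<in> Aed" using z unfolding dsum_power_carrier_def by auto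
        have zu: "\<And>k. k \<notin> {1..d} \<Longrightarrow> z k = undefined" using z unfolding dsum_power_carrier_def by auto
        define f where "f = (\<lambda>i j. coset_rep (z j i d))"
        have fp: "f i j \<in> I i d \<and> I i (d+1) +> f i j = z j i d" if ij: "i \<in> {1..d}" "j \<in> {1..d}" for i j
        proof -
          obtain g where g: "z j = mk g" "okf g" using Aed_E(1)[OF zA[OF ij(2)]] by (metis carrier_E')
          have gc: "g i d \<in> carrier R" using okfC[OF g(2) ij(1) dR] .
          obtain u where u: "u \<in> I i (d+1)" "coset_rep (I i (d+1) +> g i d) = u \<oplus> g i d"
            using rep_decomp[OF ideal_I[of i "d+1"] gc] ij by auto
          have fe: "f i j = u \<oplus> g i d" unfolding f_def g(1) mk_at[OF ij(1) dR] u(2) ..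
          have "u \<in> I i d" using J_sub[OF ij(1) dR u(1)] .
          hence "f i j \<in> I i d" unfolding fe using I_add[of i d] okfD[OF g(2) ij(1) dR] ij dn by auto
          moreover have "I i (d+1) +> f i j = z j i d"
            unfolding fe g(1) mk_at[OF ij(1) dR] using coset_absorb[OF ideal_I[of i "d+1"] u(1) gc] ij by auto
          ultimately show ?thesis by simp
        qed
        have okf: "okf f"
        proof (rule okfI)
          fix i j assume ij: "i \<in> {1..d}" "j \<in> {1..d}"
          show "f i j \<in> I i j" using fp[OF ij] I_mono[of i j d] ij dn by auto
        qed
        have xG: "mk f \<in> Gset" unfolding Gset_def using okf fp by blast
        have "F (mk f) = z"
        proof (rule ext)
          fix k show "F (mk f) k = z k"
          proof (cases "k \<in> {1..d}")
            case False thus ?thesis using zu unfolding F_def by auto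
          next
            case k: True
            show ?thesis unfolding F_mk[OF k]
            proof (intro ext)
              fix i l show "mk (col (\<lambda>i. f i k)) i l = z k i l"
              proof (cases "i \<in> {1..d} \<and> l \<in> {1..d}")
                case False thus ?thesis using carrier_out[OF Aed_E(1)[OF zA[OF k]] False] unfolding mkm_def by auto
              next
                case True
                show ?thesis
                proof (cases "l = d")
                  case True thus ?thesis using fp[of i k] \<open>i \<in> {1..d} \<and> l \<in> {1..d}\<close> k
                    by (simp add: mk_at col_def)
                next
                  case False thus ?thesis using Aed_E(2)[OF zA[OF k]] \<open>i \<in> {1..d} \<and> l \<in> {1..d}\<close>
                    by (simp add: mk_at col_def)
                qed
              qed
            qed
          qed
        qed
        thus "z \<in> F ` Gset" using xG by blast
      qed
    qed
  qed
next
  fix x y assume x: "x \<in> Gset" and y: "y \<in> Gset"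
  obtain f where f: "x = mk f" "okf f" "\<And>i j. i \<in> {1..d} \<Longrightarrow> j \<in> {1..d} \<Longrightarrow> f i j \<in> I i d"
    using G_E[OF x] by metis
  obtain g where g: "y = mk g" "okf g" "\<And>i j. i \<in> {1..d} \<Longrightarrow> j \<in> {1..d} \<Longrightarrow> g i j \<in> I i d"
    using G_E[OF y] by metis
  show "F (x \<oplus>\<^bsub>A\<^esub> y) = (\<lambda>k\<in>{1..d}. F x k \<oplus>\<^bsub>A\<^esub> F y k)"
  proof (rule ext)
    fix k show "F (x \<oplus>\<^bsub>A\<^esub> y) k = (\<lambda>k\<in>{1..d}. F x k \<oplus>\<^bsub>A\<^esub> F y k) k"
    proof (cases "k \<in> {1..d}")
      case False thus ?thesis unfolding F_def by auto
    next
      case k: True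
      have cf: "okf (col (\<lambda>i. f i k))" by (rule okf_col) (rule f(3)[OF _ k])
      have cg: "okf (col (\<lambda>i. g i k))" by (rule okf_col) (rule g(3)[OF _ k])
      show ?thesis
        unfolding f(1) g(1) addA[OF f(2) g(2)] F_mk[OF k] restrict_apply' [OF k] addA[OF cf cg]
      proof (rule mk_cong)
        fix i l assume il: "i \<in> {1..d}" "l \<in> {1..d}"
        show "col (\<lambda>i. f i k \<oplus> g i k) i l = col (\<lambda>i. f i k) i l \<oplus> col (\<lambda>i. g i k) i l"
          unfolding col_def by simp
      qed
    qed
  qed
next
  fix a x assume a: "a \<in> carrier A" and x: "x \<in> Gset"
  obtain h where h: "a = mk h" "okf h" using a by (metis carrier_E')
  obtain f where f: "x = mk f" "okf f" "\<And>i j. i \<in> {1..d} \<Longrightarrow> j \<in> {1..d} \<Longrightarrow> f i j \<in> I i d"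
    using G_E[OF x] by metis
  show "F (a \<otimes>\<^bsub>A\<^esub> x) = (\<lambda>k\<in>{1..d}. a \<otimes>\<^bsub>A\<^esub> F x k)"
  proof (rule ext)
    fix k show "F (a \<otimes>\<^bsub>A\<^esub> x) k = (\<lambda>k\<in>{1..d}. a \<otimes>\<^bsub>A\<^esub> F x k) k"
    proof (cases "k \<in> {1..d}")
      case False thus ?thesis unfolding F_def by auto
    next
      case k: True
      have cf: "okf (col (\<lambda>i. f i k))" by (rule okf_col) (rule f(3)[OF _ k])
      show ?thesis
        unfolding f(1) h(1) multA[OF h(2) f(2)] F_mk[OF k] restrict_apply' [OF k] multA[OF h(2) cf]
      proof (rule mk_cong)
        fix i l assume il: "i \<in> {1..d}" "l \<in> {1..d}"
        show "col (\<lambda>i. \<Oplus>j\<in>{1..d}. h i j \<otimes> f j k) i l = (\<Oplus>j\<in>{1..d}. h i j \<otimes> col (\<lambda>i. f i k) j l)"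
        proof (cases "l = d")
          case True thus ?thesis unfolding col_def by simp
        next
          case False
          have "(\<Oplus>j\<in>{1..d}. h i j \<otimes> col (\<lambda>i. f i k) j l) = (\<Oplus>j\<in>{1..d}. \<zero>)"
            using False il okfC[OF h(2)] by (intro finsum_cong') (auto simp: col_def)
          thus ?thesis using False unfolding col_def by (simp add: finsum_zero)
        qed
      qed
    qed
  qed
qed

end



context dsysS begin

lemma corner_eq: assumes f: "okf f"
  shows "E \<otimes>\<^bsub>A\<^esub> mk f \<otimes>\<^bsub>A\<^esub> E = mk (sg d d (f d d))"
proof -
  define g where "g = (\<lambda>i l. if i = d then \<one> \<otimes> f d l else \<zero>)"
  have okg: "okf g"
  proof (rule okfI)
    fix i l assume il: "i \<in> {1..d}" "l \<in> {1..d}"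
    show "g i l \<in> I i l" using okfD[OF f dR il(2)] okfC[OF f dR il(2)] I_zero[of i l] il dn
      unfolding g_def by auto
  qed
  have "E \<otimes>\<^bsub>A\<^esub> mk f = mk g" unfolding idemA mult_sg_left[OF f dR dR one_Idd] g_def ..
  hence "E \<otimes>\<^bsub>A\<^esub> mk f \<otimes>\<^bsub>A\<^esub> E = mk (\<lambda>i l. if l = d then g i d \<otimes> \<one> else \<zero>)"
    unfolding idemA using mult_sg_right[OF okg dR dR one_Idd] by simp
  also have "\<dots> = mk (sg d d (f d d))"
  proof (rule mk_cong)
    fix i l assume il: "i \<in> {1..d}" "l \<in> {1..d}"
    show "(if l = d then g i d \<otimes> \<one> else \<zero>) = sg d d (f d d) i l"
      using okfC[OF f dR dR] unfolding g_def sg_def by auto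
  qed
  finally show ?thesis .
qed

lemma Idd_full: "I d d = carrier R" using I_full[of d d] dn by auto

lemma corner_char: "C \<in> carrier (corner_ring A E) \<longleftrightarrow> (\<exists>x\<in>carrier R. C = mk (sg d d x))"
proof
  assume "C \<in> carrier (corner_ring A E)"
  then obtain a where a: "C = E \<otimes>\<^bsub>A\<^esub> a \<otimes>\<^bsub>A\<^esub> E" "a \<in> carrier A" unfolding corner_ring_def by auto
  then obtain f where f: "a = mk f" "okf f" by (metis carrier_E')
  show "\<exists>x\<in>carrier R. C = mk (sg d d x)" using a(1) corner_eq[OF f(2)] okfC[OF f(2) dR dR] f(1) by blast
next
  assume "\<exists>x\<in>carrier R. C = mk (sg d d x)"
  then obtain x where x: "x \<in> carrier R" "C = mk (sg d d x)" by blast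
  have ok: "okf (sg d d x)" using okf_sg[OF dR dR] x Idd_full by simp
  have "E \<otimes>\<^bsub>A\<^esub> mk (sg d d x) \<otimes>\<^bsub>A\<^esub> E = C" unfolding corner_eq[OF ok] x(2) by (simp add: sg_def)
  thus "C \<in> carrier (corner_ring A E)" unfolding corner_ring_def using mkC[OF ok] by auto
qed

lemma h_sg: "mk (sg d d x) d d = I d (d+1) +> x"
  by (simp add: mk_at[OF dR dR] sg_def)

lemma part2: "corner_ring A E \<simeq> R Quot (I d (d+1))"
proof -
  have idJ: "ideal (I d (d+1)) R" using ideal_I[of d "d+1"] dn by auto
  have Jsub: "I d (d+1) \<subseteq> carrier R" using ideal.Icarr[OF idJ] by blast
  let ?h = "\<lambda>C. C d d"
  have "?h \<in> ring_iso (corner_ring A E) (R Quot (I d (d+1)))"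
  proof (rule ring_iso_memI)
    fix C assume "C \<in> carrier (corner_ring A E)"
    then obtain x where x: "x \<in> carrier R" "C = mk (sg d d x)" using corner_char by blast
    show "?h C \<in> carrier (R Quot I d (d + 1))"
      unfolding FactRing_def x(2) h_sg using a_rcosetsI[OF Jsub x(1)] by simp
  next
    fix C D assume "C \<in> carrier (corner_ring A E)" "D \<in> carrier (corner_ring A E)"
    then obtain x y where x: "x \<in> carrier R" "C = mk (sg d d x)" and y: "y \<in> carrier R" "D = mk (sg d d y)"
      using corner_char by metis
    have oky: "y \<in> I d d" using y Idd_full by simp
    have okx: "okf (sg d d x)" using okf_sg[OF dR dR] x Idd_full by simp
    have "C \<otimes>\<^bsub>A\<^esub> D = mk (sg d d (x \<otimes> y))"
      unfolding x(2) y(2) mult_sg_right[OF okx dR dR oky]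
      by (rule mk_cong) (auto simp: sg_def x y)
    hence "?h (C \<otimes>\<^bsub>A\<^esub> D) = I d (d+1) +> (x \<otimes> y)" by (simp add: h_sg)
    also have "\<dots> = rcoset_mult R (I d (d+1)) (?h C) (?h D)"
      unfolding x(2) y(2) h_sg using ideal.rcoset_mult_add[OF idJ x(1) y(1)] by simp
    finally show "?h (C \<otimes>\<^bsub>corner_ring A E\<^esub> D) = ?h C \<otimes>\<^bsub>R Quot I d (d + 1)\<^esub> ?h D"
      unfolding corner_ring_def FactRing_def by simp
  next
    fix C D show "?h (C \<oplus>\<^bsub>corner_ring A E\<^esub> D) = ?h C \<oplus>\<^bsub>R Quot I d (d + 1)\<^esub> ?h D"
      unfolding corner_ring_def FactRing_def tiled_alg_def tiled_add_def using dR by simp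
  next
    show "?h \<one>\<^bsub>corner_ring A E\<^esub> = \<one>\<^bsub>R Quot I d (d + 1)\<^esub>"
      unfolding corner_ring_def FactRing_def tiled_idem_def tiled_diag_def using dR by simp
  next
    show "bij_betw ?h (carrier (corner_ring A E)) (carrier (R Quot I d (d + 1)))"
      unfolding bij_betw_def
    proof
      show "inj_on ?h (carrier (corner_ring A E))"
      proof (rule inj_onI)
        fix C D assume "C \<in> carrier (corner_ring A E)" "D \<in> carrier (corner_ring A E)" and e: "C d d = D d d"
        then obtain x y where x: "x \<in> carrier R" "C = mk (sg d d x)" and y: "y \<in> carrier R" "D = mk (sg d d y)"
          using corner_char by metis
        have e': "I d (d+1) +> x = I d (d+1) +> y" using e unfolding x(2) y(2) h_sg .
        show "C = D" unfolding x(2) y(2) mkm_def sg_def using e' by (intro ext) auto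
      qed
    next
      show "?h ` carrier (corner_ring A E) = carrier (R Quot I d (d + 1))"
      proof
        show "?h ` carrier (corner_ring A E) \<subseteq> carrier (R Quot I d (d + 1))"
        proof
          fix X assume "X \<in> ?h ` carrier (corner_ring A E)"
          then obtain x where x: "x \<in> carrier R" "X = mk (sg d d x) d d" using corner_char by auto
          show "X \<in> carrier (R Quot I d (d + 1))"
            unfolding FactRing_def x(2) h_sg using a_rcosetsI[OF Jsub x(1)] by simp
        qed
      next
        show "carrier (R Quot I d (d + 1)) \<subseteq> ?h ` carrier (corner_ring A E)"
        proof
          fix X assume "X \<in> carrier (R Quot I d (d + 1))"
          then obtain x where x: "x \<in> carrier R" "X = I d (d+1) +> x"
            unfolding FactRing_def A_RCOSETS_def' by auto
          have "mk (sg d d x) \<in> carrier (corner_ring A E)" using corner_char x by blast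
          moreover have "X = ?h (mk (sg d d x))" using x(2) h_sg by simp
          ultimately show "X \<in> ?h ` carrier (corner_ring A E)" by blast
        qed
      qed
    qed
  qed
  thus ?thesis unfolding is_ring_iso_def by blast
qed

lemma part3: "A Quot (genideal A {E}) \<simeq> S.A"
  unfolding gen_eq kernel_G[symmetric] using ring_hom_ring.FactRing_iso[OF phi_hom phi_surj] .

end

theorem proposition3p7:
  fixes R :: "('a, 'b) ring_scheme" and d :: nat and I :: "nat \<Rightarrow> nat \<Rightarrow> 'a set"
  assumes "ring R" and "d \<ge> 1" and "d_system R d I"
  defines "A \<equiv> tiled_alg R d I"
  defines "e \<equiv> tiled_idem R d I"
  shows
   "(\<exists>f. left_module_iso A
          (genideal A {e d}) (add A) (mult A)
          (dsum_power_carrier {a \<otimes>\<^bsub>A\<^esub> e d | a. a \<in> carrier A} d)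
          (\<lambda>x y. \<lambda>k\<in>{1..d}. x k \<oplus>\<^bsub>A\<^esub> y k)
          (\<lambda>a x. \<lambda>k\<in>{1..d}. a \<otimes>\<^bsub>A\<^esub> x k) f)
    \<and> corner_ring A (e d) \<simeq> R Quot (I d (d+1))
    \<and> (d \<ge> 2 \<longrightarrow> d_system R (d - 1) I \<and> A Quot (genideal A {e d}) \<simeq> tiled_alg R (d - 1) I)"
proof -
  obtain n where dn: "d = Suc n" using assms(2) by (cases d) auto
  interpret D: dsysS R d I n
    by (intro dsysS.intro dsys.intro dsysS_axioms.intro) (use assms dn in \<open>auto simp: dsys_axioms_def\<close>)
  have p1: "\<exists>f. left_module_iso A
          (genideal A {e d}) (add A) (mult A)
          (dsum_power_carrier {a \<otimes>\<^bsub>A\<^esub> e d | a. a \<in> carrier A} d)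
          (\<lambda>x y. \<lambda>k\<in>{1..d}. x k \<oplus>\<^bsub>A\<^esub> y k)
          (\<lambda>a x. \<lambda>k\<in>{1..d}. a \<otimes>\<^bsub>A\<^esub> x k) f"
    unfolding A_def e_def D.gen_eq D.Aed_def[symmetric] using D.part1 by blast
  have p2: "corner_ring A (e d) \<simeq> R Quot (I d (d+1))"
    unfolding A_def e_def using D.part2 .
  have p3: "d \<ge> 2 \<longrightarrow> d_system R (d - 1) I \<and> A Quot (genideal A {e d}) \<simeq> tiled_alg R (d - 1) I"
    unfolding A_def e_def using D.part3 D.S.ds dn by simp
  show ?thesis using p1 p2 p3 by blast
qed



end
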